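(* Let $T$ be a type distribution on $\mathcal{S}\subseteq\mathbb{N}$, let $\mathcal{Q}_n$ be a monotone event, and let $\Lambda_n,\Lambda_n':\mathcal{S}\times\mathcal{S}\to\mathbb{N}$ satisfy $\Lambda_n(t,s)\le\Lambda_n'(t,s)$ for all $t,s\in\mathcal{S}$. Then: 1. if $\mathcal{Q}_n$ is increasing, $\mathbb{P}(\texttt{ARD}_n(T,\Lambda_n)\in\mathcal{Q}_n)\le\mathbb{P}(\texttt{ARD}_n(T,\Lambda_n')\in\mathcal{Q}_n)$; 2. if $\mathcal{Q}_n$ is decreasing, $\mathbb{P}(\texttt{ARD}_n(T,\Lambda_n)\in\mathcal{Q}_n)\ge\mathbb{P}(\texttt{ARD}_n(T,\Lambda_n')\in\mathcal{Q}_n)$.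
   Context: $\texttt{ARD}_n(T,\Lambda_n)$: vertex set $[n]$, types $T_v$ i.i.d. as $T$; with $V_t=\{v:T_v=t\}$, independently for each $(t,s)\in\mathcal{S}^2$ choose $\Lambda_n(t,s)$ arcs uniformly at random without replacement from $(V_t\times V_s)\setminus\{(v,v):v\in[n]\}$ (all of them if there are fewer). For marked digraphs, $G_1\subseteq G_2$ if vertices carry the same marks and arcs of $G_1$ are arcs of $G_2$; $\mathcal{Q}_n$ is increasing if $G_1\in\mathcal{Q}_n,G_1\subseteq G_2\Rightarrow G_2\in\mathcal{Q}_n$, decreasing if $G_2\in\mathcal{Q}_n,G_1\subseteq G_2\Rightarrow G_1\in\mathcal{Q}_n$, monotone if either. *)

theory Defs
  imports "HOL-Probability.Probability"
begin

text \<open>A marked digraph: a pair (marks, arcs), marks :: vertex => type, arcs a set of pairs.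
  Vertex set [n] is represented as {0..<n}.\<close>
type_synonym mdigraph = "(nat \<Rightarrow> nat) \<times> (nat \<times> nat) set"

definition on_vertices :: "nat \<Rightarrow> mdigraph \<Rightarrow> bool" where
  "on_vertices n G \<longleftrightarrow> snd G \<subseteq> {(u,v). u < n \<and> v < n \<and> u \<noteq> v}"

definition msubgraph :: "mdigraph \<Rightarrow> mdigraph \<Rightarrow> bool" where
  "msubgraph G1 G2 \<longleftrightarrow> fst G1 = fst G2 \<and> snd G1 \<subseteq> snd G2"

definition increasing_event :: "nat \<Rightarrow> mdigraph set \<Rightarrow> bool" where
  "increasing_event n Q \<longleftrightarrow> (\<forall>G1 G2. on_vertices n G1 \<and> on_vertices n G2 \<and>
      msubgraph G1 G2 \<and> G1 \<in> Q \<longrightarrow> G2 \<in> Q)"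

definition decreasing_event :: "nat \<Rightarrow> mdigraph set \<Rightarrow> bool" where
  "decreasing_event n Q \<longleftrightarrow> (\<forall>G1 G2. on_vertices n G1 \<and> on_vertices n G2 \<and>
      msubgraph G1 G2 \<and> G2 \<in> Q \<longrightarrow> G1 \<in> Q)"

definition cand_arcs :: "nat \<Rightarrow> (nat \<Rightarrow> nat) \<Rightarrow> nat \<Rightarrow> nat \<Rightarrow> (nat \<times> nat) set" where
  "cand_arcs n tp t s = {(u,v). u < n \<and> v < n \<and> u \<noteq> v \<and> tp u = t \<and> tp v = s}"

definition choose_arcs :: "nat \<Rightarrow> (nat \<times> nat) set \<Rightarrow> (nat \<times> nat) set pmf" where
  "choose_arcs k C = pmf_of_set {A. A \<subseteq> C \<and> card A = min k (card C)}"

text \<open>ARD_n(T, Lambda): types i.i.d. T on {0..<n} (marks 0 outside, irrelevant);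
  then independently for each pair of types occurring, choose arcs.\<close>
definition ARD :: "nat \<Rightarrow> nat pmf \<Rightarrow> (nat \<Rightarrow> nat \<Rightarrow> nat) \<Rightarrow> mdigraph pmf" where
  "ARD n T \<Lambda> =
     do { tp \<leftarrow> Pi_pmf {0..<n} 0 (\<lambda>_. T);
          let P = (tp ` {0..<n}) \<times> (tp ` {0..<n});
          ch \<leftarrow> Pi_pmf P {} (\<lambda>(t,s). choose_arcs (\<Lambda> t s) (cand_arcs n tp t s));
          return_pmf (tp, \<Union>p\<in>P. ch p) }"

end

theory Submission
  imports Defs
begin

lemma binid: "k < n \<Longrightarrow> (n choose k) * (n - k) = (n choose Suc k) * Suc (k::nat)"
  by (metis binomial_absorb_comp binomial_absorption mult.commute)

definition U :: "'a set \<Rightarrow> nat \<Rightarrow> 'a set pmf" where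
  "U C m = pmf_of_set {A. A \<subseteq> C \<and> card A = m}"

lemma U_fin: "finite C \<Longrightarrow> finite {A. A \<subseteq> C \<and> card A = m}"
  by (rule finite_subset[of _ "Pow C"]) auto

lemma U_ne: "finite C \<Longrightarrow> m \<le> card C \<Longrightarrow> {A. A \<subseteq> C \<and> card A = m} \<noteq> {}"
  using obtain_subset_with_card_n by blast

lemma set_U: "finite C \<Longrightarrow> m \<le> card C \<Longrightarrow> set_pmf (U C m) = {A. A \<subseteq> C \<and> card A = m}"
  unfolding U_def using U_fin U_ne by (metis set_pmf_of_set)

lemma step_eq:
  assumes fin: "finite C" and m: "m < card C"
  shows "bind_pmf (U C m) (\<lambda>A. map_pmf (\<lambda>x. insert x A) (pmf_of_set (C - A))) = U C (Suc m)"
proof (rule pmf_eqI)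
  fix B
  let ?X = "{A. A \<subseteq> C \<and> card A = m}"
  let ?Y = "{A. A \<subseteq> C \<and> card A = Suc m}"
  let ?f = "\<lambda>A. map_pmf (\<lambda>x. insert x A) (pmf_of_set (C - A))"
  let ?c = "card C"
  have finX: "finite ?X" using U_fin fin .
  have neX: "?X \<noteq> {}" using U_ne[OF fin, of m] m by simp
  have finY: "finite ?Y" using U_fin fin .
  have neY: "?Y \<noteq> {}" using U_ne[OF fin, of "Suc m"] m by simp
  have cardX: "card ?X = ?c choose m" using n_subsets fin .
  have cardY: "card ?Y = ?c choose Suc m" using n_subsets fin .
  have pU: "pmf (U C m) A = 1 / real (?c choose m)" if "A \<in> ?X" for A
    using that finX neX cardX unfolding U_def by simp
  have pf: "pmf (?f A) B = real (card ((C - A) \<inter> {x. insert x A = B})) / real (?c - m)"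
    if A: "A \<in> ?X" for A
  proof -
    have fA: "finite A" using A fin finite_subset by blast
    have ne: "C - A \<noteq> {}" using A m by auto
    have cd: "card (C - A) = ?c - m" using A fin by (simp add: card_Diff_subset fA)
    have "pmf (?f A) B = measure (pmf_of_set (C - A)) ((\<lambda>x. insert x A) -` {B})"
      by (rule pmf_map)
    also have "\<dots> = card ((C - A) \<inter> ((\<lambda>x. insert x A) -` {B})) / card (C - A)"
      using ne fin by (simp add: measure_pmf_of_set)
    also have "(\<lambda>x. insert x A) -` {B} = {x. insert x A = B}" by auto
    finally show ?thesis using cd by simp
  qed
  have "pmf (bind_pmf (U C m) ?f) B = (\<integral>A. pmf (?f A) B \<partial>measure_pmf (U C m))"
    by (rule pmf_bind)
  also have "\<dots> = (\<Sum>A\<in>?X. pmf (?f A) B * pmf (U C m) A)"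
    by (rule integral_measure_pmf_real) (use finX set_U[OF fin, of m] m in auto)
  also have "\<dots> = (\<Sum>A\<in>?X. real (card ((C - A) \<inter> {x. insert x A = B})) / real (?c - m) * (1 / real (?c choose m)))"
    by (rule sum.cong) (simp_all add: pf pU)
  finally have L: "pmf (bind_pmf (U C m) ?f) B = \<dots>" .
  show "pmf (bind_pmf (U C m) ?f) B = pmf (U C (Suc m)) B"
  proof (cases "B \<in> ?Y")
    case True
    have cnt: "card ((C - A) \<inter> {x. insert x A = B}) = (if A \<subseteq> B then 1 else 0)" if A: "A \<in> ?X" for A
    proof (cases "A \<subseteq> B")
      case sub: True
      have fB: "finite B" using True fin finite_subset by blast
      have "card (B - A) = 1" using sub True A fB by (simp add: card_Diff_subset finite_subset)
      then obtain b where b: "B - A = {b}" by (auto simp: card_Suc_eq)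
      have "(C - A) \<inter> {x. insert x A = B} = {b}"
        using b sub True by auto
      then show ?thesis using sub by simp
    next
      case False
      then have "(C - A) \<inter> {x. insert x A = B} = {}" by auto
      then show ?thesis using False by simp
    qed
    have "(\<Sum>A\<in>?X. real (card ((C - A) \<inter> {x. insert x A = B})) / real (?c - m) * (1 / real (?c choose m)))
        = (\<Sum>A\<in>?X. (if A \<subseteq> B then 1 else 0) / real (?c - m) * (1 / real (?c choose m)))"
      by (rule sum.cong) (simp_all add: cnt)
    also have "\<dots> = (\<Sum>A\<in>{A\<in>?X. A \<subseteq> B}. 1 / real (?c - m) * (1 / real (?c choose m)))"
      by (subst sum.inter_filter[OF finX]) (rule sum.cong, simp_all)
    also have "{A\<in>?X. A \<subseteq> B} = {A. A \<subseteq> B \<and> card A = m}" using True by auto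
    finally have S1: "(\<Sum>A\<in>?X. real (card ((C - A) \<inter> {x. insert x A = B})) / real (?c - m) * (1 / real (?c choose m)))
       = (\<Sum>A\<in>{A. A \<subseteq> B \<and> card A = m}. 1 / real (?c - m) * (1 / real (?c choose m)))" .
    have cB: "card {A. A \<subseteq> B \<and> card A = m} = Suc m"
    proof -
      have fB: "finite B" using True fin finite_subset by blast
      have "card B = Suc m" using True by simp
      then show ?thesis using n_subsets[OF fB, of m] by simp
    qed
    have "pmf (bind_pmf (U C m) ?f) B = real (Suc m) / (real (?c - m) * real (?c choose m))"
      using L S1 cB by simp
    also have "\<dots> = 1 / real (?c choose Suc m)"
    proof -
      have e: "real (?c choose m) * real (?c - m) = real (?c choose Suc m) * real (Suc m)"
        using binid[OF m] by (metis of_nat_mult)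
      have p: "real (?c choose Suc m) > 0" using m by simp
      have e': "real (?c - m) * real (?c choose m) = real (?c choose Suc m) * real (Suc m)"
        using e by (simp only: mult.commute)
      show ?thesis unfolding e' using p by (simp only: field_simps) simp
    qed
    also have "\<dots> = pmf (U C (Suc m)) B"
      using True finY neY cardY unfolding U_def by simp
    finally show ?thesis .
  next
    case False
    have "card ((C - A) \<inter> {x. insert x A = B}) = 0" if A: "A \<in> ?X" for A
    proof -
      have "(C - A) \<inter> {x. insert x A = B} = {}"
      proof (rule ccontr)
        assume "(C - A) \<inter> {x. insert x A = B} \<noteq> {}"
        then obtain x where x: "x \<in> C" "x \<notin> A" "insert x A = B" by auto
        have fA: "finite A" using A fin finite_subset by blast
        then have "B \<in> ?Y" using x A by auto
        then show False using False by simp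
      qed
      then show ?thesis by simp
    qed
    then have "pmf (bind_pmf (U C m) ?f) B = 0" using L by simp
    also have "0 = pmf (U C (Suc m)) B" using False finY neY unfolding U_def by simp
    finally show ?thesis .
  qed
qed


lemma U_step_rel:
  assumes fin: "finite C" and m: "m < card C"
  shows "rel_pmf (\<subseteq>) (U C m) (U C (Suc m))"
proof -
  have "rel_pmf (\<subseteq>) (bind_pmf (U C m) return_pmf)
          (bind_pmf (U C m) (\<lambda>A. map_pmf (\<lambda>x. insert x A) (pmf_of_set (C - A))))"
    by (rule rel_pmf_bindI[where R="(=)"]) (auto simp: pmf.rel_eq rel_pmf_return_pmf1)
  then show ?thesis using step_eq[OF fin m] by (simp add: bind_return_pmf')
qed

lemma U_rel:
  assumes fin: "finite C"
  shows "m \<le> m' \<Longrightarrow> m' \<le> card C \<Longrightarrow> rel_pmf (\<subseteq>) (U C m) (U C m')"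
proof (induction m')
  case 0
  then show ?case by (auto intro: rel_pmf_reflI)
next
  case (Suc m')
  show ?case
  proof (cases "m = Suc m'")
    case True
    then show ?thesis by (auto intro: rel_pmf_reflI)
  next
    case False
    then have a: "rel_pmf (\<subseteq>) (U C m) (U C m')" using Suc by simp
    have b: "rel_pmf (\<subseteq>) (U C m') (U C (Suc m'))" using U_step_rel[OF fin] Suc by simp
    have "rel_pmf ((\<subseteq>) OO (\<subseteq>)) (U C m) (U C (Suc m'))"
      using a b by (auto simp: pmf.rel_compp)
    then show ?thesis by (rule pmf.rel_mono_strong) auto
  qed
qed

lemma choose_rel:
  assumes fin: "finite C" and k: "k \<le> k'"
  shows "rel_pmf (\<lambda>A B. A \<subseteq> B \<and> B \<subseteq> C) (choose_arcs k C) (choose_arcs k' C)"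
proof -
  have "rel_pmf (\<subseteq>) (U C (min k (card C))) (U C (min k' (card C)))"
    using U_rel[OF fin] k by simp
  then have "rel_pmf (\<lambda>A B. A \<subseteq> B \<and> B \<subseteq> C) (U C (min k (card C))) (U C (min k' (card C)))"
    by (rule pmf.rel_mono_strong) (use set_U[OF fin] in auto)
  then show ?thesis by (simp add: choose_arcs_def U_def)
qed

lemma Pi_rel:
  assumes "finite A"
  shows "(\<And>x. x \<in> A \<Longrightarrow> rel_pmf (R x) (p x) (q x)) \<Longrightarrow>
    rel_pmf (\<lambda>f g. \<forall>x\<in>A. R x (f x) (g x)) (Pi_pmf A d p) (Pi_pmf A d q)"
  using assms
proof (induction A rule: finite_induct)
  case empty
  then show ?case by simp
next
  case (insert x F)
  have IH: "rel_pmf (\<lambda>f g. \<forall>x\<in>F. R x (f x) (g x)) (Pi_pmf F d p) (Pi_pmf F d q)"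
    using insert by simp
  show ?case
    unfolding Pi_pmf_insert'[OF insert(1,2)]
    apply (rule rel_pmf_bindI[where R="R x"])
     apply (simp add: insert)
    apply (rule rel_pmf_bindI[OF IH])
    using insert(2) by auto
qed

definition Rel :: "nat \<Rightarrow> mdigraph \<Rightarrow> mdigraph \<Rightarrow> bool" where
  "Rel n G1 G2 \<longleftrightarrow> on_vertices n G1 \<and> on_vertices n G2 \<and> msubgraph G1 G2"

lemma ARD_rel:
  assumes T: "set_pmf T \<subseteq> S"
    and L: "\<And>t s. t \<in> S \<Longrightarrow> s \<in> S \<Longrightarrow> \<Lambda> t s \<le> \<Lambda>' t s"
  shows "rel_pmf (Rel n) (ARD n T \<Lambda>) (ARD n T \<Lambda>')"
  unfolding ARD_def Let_def
proof (rule rel_pmf_bindI[where R="\<lambda>x y. x = y \<and> x \<in> set_pmf (Pi_pmf {0..<n} 0 (\<lambda>_. T))"])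
  show "rel_pmf (\<lambda>x y. x = y \<and> x \<in> set_pmf (Pi_pmf {0..<n} 0 (\<lambda>_. T)))
     (Pi_pmf {0..<n} 0 (\<lambda>_. T)) (Pi_pmf {0..<n} 0 (\<lambda>_. T))"
    by (rule rel_pmf_reflI) simp
next
  fix tp tp'
  assume "tp = tp' \<and> tp \<in> set_pmf (Pi_pmf {0..<n} 0 (\<lambda>_. T))"
  then have eq: "tp' = tp" and tp: "tp \<in> set_pmf (Pi_pmf {0..<n} 0 (\<lambda>_. T))" by auto
  have tpS: "tp u \<in> S" if "u < n" for u
    using tp that T by (auto simp: set_Pi_pmf PiE_dflt_def)
  let ?P = "tp ` {0..<n} \<times> tp ` {0..<n}"
  have finP: "finite ?P" by simp
  have finC: "finite (cand_arcs n tp t s)" for t s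
    by (rule finite_subset[of _ "{0..<n} \<times> {0..<n}"]) (auto simp: cand_arcs_def)
  have R: "rel_pmf (\<lambda>f g. \<forall>x\<in>?P. (\<lambda>p A B. A \<subseteq> B \<and> B \<subseteq> cand_arcs n tp (fst p) (snd p)) x (f x) (g x))
     (Pi_pmf ?P {} (\<lambda>(t, s). choose_arcs (\<Lambda> t s) (cand_arcs n tp t s)))
     (Pi_pmf ?P {} (\<lambda>(t, s). choose_arcs (\<Lambda>' t s) (cand_arcs n tp t s)))"
  proof (rule Pi_rel[OF finP])
    fix x assume x: "x \<in> ?P"
    then obtain t s where ts: "x = (t, s)" "t \<in> S" "s \<in> S" using tpS by auto
    show "rel_pmf (\<lambda>A B. A \<subseteq> B \<and> B \<subseteq> cand_arcs n tp (fst x) (snd x))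
       ((\<lambda>(t, s). choose_arcs (\<Lambda> t s) (cand_arcs n tp t s)) x)
       ((\<lambda>(t, s). choose_arcs (\<Lambda>' t s) (cand_arcs n tp t s)) x)"
      using choose_rel[OF finC L[OF ts(2,3)]] ts(1) by simp
  qed
  show "rel_pmf (Rel n)
     (Pi_pmf ?P {} (\<lambda>(t, s). choose_arcs (\<Lambda> t s) (cand_arcs n tp t s)) \<bind>
       (\<lambda>ch. return_pmf (tp, \<Union> (ch ` ?P))))
     (Pi_pmf (tp' ` {0..<n} \<times> tp' ` {0..<n}) {} (\<lambda>(t, s). choose_arcs (\<Lambda>' t s) (cand_arcs n tp' t s)) \<bind>
       (\<lambda>ch. return_pmf (tp', \<Union> (ch ` (tp' ` {0..<n} \<times> tp' ` {0..<n})))))"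
    unfolding eq
  proof (rule rel_pmf_bindI[OF R])
    fix f g
    assume fg: "\<forall>x\<in>?P. (\<lambda>p A B. A \<subseteq> B \<and> B \<subseteq> cand_arcs n tp (fst p) (snd p)) x (f x) (g x)"
    have "\<Union> (g ` ?P) \<subseteq> {(u,v). u < n \<and> v < n \<and> u \<noteq> v}"
      using fg by (fastforce simp: cand_arcs_def)
    moreover have "\<Union> (f ` ?P) \<subseteq> \<Union> (g ` ?P)" using fg by fastforce
    ultimately show "rel_pmf (Rel n) (return_pmf (tp, \<Union> (f ` ?P))) (return_pmf (tp, \<Union> (g ` ?P)))"
      by (auto simp: Rel_def on_vertices_def msubgraph_def)
  qed
qed

theorem lemma5:
  fixes n :: nat and T :: "nat pmf" and S :: "nat set"
    and \<Lambda> \<Lambda>' :: "nat \<Rightarrow> nat \<Rightarrow> nat" and Q :: "mdigraph set"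
  assumes "set_pmf T \<subseteq> S"
    and "increasing_event n Q \<or> decreasing_event n Q"
    and "\<And>t s. t \<in> S \<Longrightarrow> s \<in> S \<Longrightarrow> \<Lambda> t s \<le> \<Lambda>' t s"
  shows "(increasing_event n Q \<longrightarrow>
           measure_pmf.prob (ARD n T \<Lambda>) Q \<le> measure_pmf.prob (ARD n T \<Lambda>') Q) \<and>
         (decreasing_event n Q \<longrightarrow>
           measure_pmf.prob (ARD n T \<Lambda>) Q \<ge> measure_pmf.prob (ARD n T \<Lambda>') Q)"
proof (intro conjI impI)
  have rel: "rel_pmf (Rel n) (ARD n T \<Lambda>) (ARD n T \<Lambda>')"
    using ARD_rel assms(1,3) by blast
  assume inc: "increasing_event n Q"
  have "measure_pmf.prob (ARD n T \<Lambda>) Q \<le> measure_pmf.prob (ARD n T \<Lambda>') {y. \<exists>x\<in>Q. Rel n x y}"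
    by (rule rel_pmf_measureD[OF rel])
  also have "\<dots> \<le> measure_pmf.prob (ARD n T \<Lambda>') Q"
    by (rule measure_pmf.finite_measure_mono)
       (use inc in \<open>auto simp: increasing_event_def Rel_def\<close>)
  finally show "measure_pmf.prob (ARD n T \<Lambda>) Q \<le> measure_pmf.prob (ARD n T \<Lambda>') Q" .
next
  have rel: "rel_pmf (Rel n)\<inverse>\<inverse> (ARD n T \<Lambda>') (ARD n T \<Lambda>)"
    using ARD_rel[OF assms(1,3)] by (simp add: pmf.rel_flip)
  assume dec: "decreasing_event n Q"
  have "measure_pmf.prob (ARD n T \<Lambda>') Q \<le> measure_pmf.prob (ARD n T \<Lambda>) {y. \<exists>x\<in>Q. (Rel n)\<inverse>\<inverse> x y}"
    by (rule rel_pmf_measureD[OF rel])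
  also have "\<dots> \<le> measure_pmf.prob (ARD n T \<Lambda>) Q"
    by (rule measure_pmf.finite_measure_mono)
       (use dec in \<open>auto simp: decreasing_event_def Rel_def\<close>)
  finally show "measure_pmf.prob (ARD n T \<Lambda>) Q \<ge> measure_pmf.prob (ARD n T \<Lambda>') Q" .
qed

end
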